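(* Let $M$ be a tame paving matroid of rank $n$ on $[d]$ and let $\mathcal{Q}=\{Q_1,\ldots,Q_k\}$ be a partition of its set of dependent hyperplanes. Then $M(\mathcal{Q})\ge M$, i.e., every dependent set of $M$ is dependent in $M(\mathcal{Q})$.
   Context: A matroid of rank $n$ is paving if every circuit has size $n$ or $n+1$; a dependent hyperplane is a maximal subset of size at least $n$ all of whose $n$-element subsets are circuits; a paving matroid is tame if any three distinct dependent hyperplanes have empty intersection. Quasi-paving construction: for $n\le d$ and a collection $\mathcal{H}$ of subsets of $[d]$ any three of which have empty intersection, the matroid on $[d]$ whose circuits are (Type 1) the $(n-1)$-subsets contained in the intersection of two distinct members of $\mathcal{H}$, (Type 2) the $n$-subsets of a member of $\mathcal{H}$ containing no Type 1 set, (Type 3) the $(n+1)$-subsets containing no Type 1 or Type 2 set. For a partition $\mathcal{Q}=\{Q_1,\ldots,Q_k\}$ of the dependent hyperplanes of $M$, set $H_i=\bigcup_{l\in Q_i}l$ and let $M(\mathcal{Q})$ be the matroid obtained from the quasi-paving construction applied to $\mathcal{H}=\{H_1,\ldots,H_k\}$ and the integer $n$ (each element lies in at most two $H_i$ since $M$ is tame). *)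

theory Defs
  imports Main "HOL-Library.Disjoint_Sets"
begin

definition matroid_circuits :: "'a set \<Rightarrow> 'a set set \<Rightarrow> bool" where
  "matroid_circuits E C \<longleftrightarrow> finite E \<and>
     (\<forall>X\<in>C. X \<subseteq> E) \<and> {} \<notin> C \<and>
     (\<forall>X\<in>C. \<forall>Y\<in>C. X \<subseteq> Y \<longrightarrow> X = Y) \<and>
     (\<forall>X\<in>C. \<forall>Y\<in>C. \<forall>e. X \<noteq> Y \<and> e \<in> X \<inter> Y \<longrightarrow>
        (\<exists>Z\<in>C. Z \<subseteq> (X \<union> Y) - {e}))"

definition indep :: "'a set \<Rightarrow> 'a set set \<Rightarrow> 'a set \<Rightarrow> bool" where
  "indep E C X \<longleftrightarrow> X \<subseteq> E \<and> (\<forall>Z\<in>C. \<not> Z \<subseteq> X)"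

definition dependent :: "'a set \<Rightarrow> 'a set set \<Rightarrow> 'a set \<Rightarrow> bool" where
  "dependent E C X \<longleftrightarrow> X \<subseteq> E \<and> \<not> indep E C X"

definition has_rank :: "'a set \<Rightarrow> 'a set set \<Rightarrow> nat \<Rightarrow> bool" where
  "has_rank E C n \<longleftrightarrow> (\<exists>X. indep E C X \<and> card X = n) \<and>
     (\<forall>X. indep E C X \<longrightarrow> card X \<le> n)"

definition paving :: "'a set \<Rightarrow> 'a set set \<Rightarrow> nat \<Rightarrow> bool" where
  "paving E C n \<longleftrightarrow> matroid_circuits E C \<and> has_rank E C n \<and>
     (\<forall>X\<in>C. card X = n \<or> card X = n + 1)"

definition hyp_cand :: "'a set \<Rightarrow> 'a set set \<Rightarrow> nat \<Rightarrow> 'a set \<Rightarrow> bool" where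
  "hyp_cand E C n H \<longleftrightarrow> H \<subseteq> E \<and> n \<le> card H \<and>
     (\<forall>S. S \<subseteq> H \<and> card S = n \<longrightarrow> S \<in> C)"

definition dep_hyperplane :: "'a set \<Rightarrow> 'a set set \<Rightarrow> nat \<Rightarrow> 'a set \<Rightarrow> bool" where
  "dep_hyperplane E C n H \<longleftrightarrow> hyp_cand E C n H \<and>
     (\<forall>H'. hyp_cand E C n H' \<and> H \<subseteq> H' \<longrightarrow> H' = H)"

definition tame :: "'a set \<Rightarrow> 'a set set \<Rightarrow> nat \<Rightarrow> bool" where
  "tame E C n \<longleftrightarrow> paving E C n \<and>
     (\<forall>H1 H2 H3. dep_hyperplane E C n H1 \<and> dep_hyperplane E C n H2 \<and>
        dep_hyperplane E C n H3 \<and> H1 \<noteq> H2 \<and> H1 \<noteq> H3 \<and> H2 \<noteq> H3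
        \<longrightarrow> H1 \<inter> H2 \<inter> H3 = {})"

text \<open>Quasi-paving construction on [d] = {1..d}, for a collection of sets
  given as an indexed family Hf over the index set I.
  "card S + 1 = n" encodes |S| = n - 1 (integer subtraction).\<close>
definition qp_type1 :: "nat \<Rightarrow> nat \<Rightarrow> 'i set \<Rightarrow> ('i \<Rightarrow> nat set) \<Rightarrow> nat set \<Rightarrow> bool" where
  "qp_type1 d n I Hf S \<longleftrightarrow> S \<subseteq> {1..d} \<and> card S + 1 = n \<and>
     (\<exists>i\<in>I. \<exists>j\<in>I. i \<noteq> j \<and> S \<subseteq> Hf i \<inter> Hf j)"

definition qp_type2 :: "nat \<Rightarrow> nat \<Rightarrow> 'i set \<Rightarrow> ('i \<Rightarrow> nat set) \<Rightarrow> nat set \<Rightarrow> bool" where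
  "qp_type2 d n I Hf S \<longleftrightarrow> S \<subseteq> {1..d} \<and> card S = n \<and>
     (\<exists>i\<in>I. S \<subseteq> Hf i) \<and> (\<forall>T. T \<subseteq> S \<longrightarrow> \<not> qp_type1 d n I Hf T)"

definition qp_type3 :: "nat \<Rightarrow> nat \<Rightarrow> 'i set \<Rightarrow> ('i \<Rightarrow> nat set) \<Rightarrow> nat set \<Rightarrow> bool" where
  "qp_type3 d n I Hf S \<longleftrightarrow> S \<subseteq> {1..d} \<and> card S = n + 1 \<and>
     (\<forall>T. T \<subseteq> S \<longrightarrow> \<not> qp_type1 d n I Hf T \<and> \<not> qp_type2 d n I Hf T)"

definition qp_circuits :: "nat \<Rightarrow> nat \<Rightarrow> 'i set \<Rightarrow> ('i \<Rightarrow> nat set) \<Rightarrow> nat set set" where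
  "qp_circuits d n I Hf =
     {S. qp_type1 d n I Hf S \<or> qp_type2 d n I Hf S \<or> qp_type3 d n I Hf S}"

definition MQ_circuits :: "nat \<Rightarrow> nat \<Rightarrow> nat set set set \<Rightarrow> nat set set" where
  "MQ_circuits d n Q = qp_circuits d n Q (\<lambda>q. \<Union>q)"

end

theory Submission
  imports Defs
begin

lemma in_dep_hyp:
  assumes "Z \<in> C" "Z \<subseteq> {1..d::nat}" "card Z = n"
  shows "\<exists>H. dep_hyperplane {1..d} C n H \<and> Z \<subseteq> H"
proof -
  let ?A = "{H. hyp_cand {1..d} C n H \<and> Z \<subseteq> H}"
  have fin: "finite ?A"
    by (rule finite_subset[of _ "Pow {1..d}"]) (auto simp: hyp_cand_def)
  have "Z \<in> ?A"
  proof -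
    have "S = Z" if "S \<subseteq> Z" "card S = n" for S
      using that assms(3) card_subset_eq[of Z S] finite_subset[OF assms(2)] by auto
    then show ?thesis using assms by (auto simp: hyp_cand_def)
  qed
  then have "?A \<noteq> {}" by blast
  from finite_has_maximal[OF fin this] obtain m where
    m: "m \<in> ?A" "\<forall>b\<in>?A. m \<subseteq> b \<longrightarrow> m = b" by blast
  have "dep_hyperplane {1..d} C n m"
    unfolding dep_hyperplane_def
  proof (intro conjI allI impI)
    show "hyp_cand {1..d} C n m" using m by auto
    fix H' assume "hyp_cand {1..d} C n H' \<and> m \<subseteq> H'"
    then show "H' = m" using m by blast
  qed
  then show ?thesis using m by blast
qed

theorem lemma4p3:
  fixes d n :: nat and C :: "nat set set" and Q :: "nat set set set"
  assumes "tame {1..d} C n"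
    and "partition_on {H. dep_hyperplane {1..d} C n H} Q"
  shows "\<forall>X. dependent {1..d} C X \<longrightarrow> dependent {1..d} (MQ_circuits d n Q) X"
proof (intro allI impI)
  fix X assume dX: "dependent {1..d} C X"
  then have Xs: "X \<subseteq> {1..d}" by (simp add: dependent_def)
  from dX obtain Z where Z: "Z \<in> C" "Z \<subseteq> X" by (auto simp: dependent_def indep_def)
  have pav: "paving {1..d} C n" using assms(1) by (simp add: tame_def)
  have Zs: "Z \<subseteq> {1..d}" using Z Xs by blast
  have cZ: "card Z = n \<or> card Z = n + 1" using pav Z by (simp add: paving_def)
  have "\<exists>W \<in> MQ_circuits d n Q. W \<subseteq> Z"
  proof (cases "\<exists>T. T \<subseteq> Z \<and> (qp_type1 d n Q (\<lambda>q. \<Union>q) T \<or> qp_type2 d n Q (\<lambda>q. \<Union>q) T)")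
    case True
    then show ?thesis by (auto simp: MQ_circuits_def qp_circuits_def)
  next
    case False
    show ?thesis
    proof (cases "card Z = n")
      case True
      from in_dep_hyp[OF Z(1) Zs True] obtain H where
        H: "dep_hyperplane {1..d} C n H" "Z \<subseteq> H" by blast
      from assms(2) H(1) obtain q where q: "q \<in> Q" "H \<in> q"
        unfolding partition_on_def by blast
      have "qp_type2 d n Q (\<lambda>q. \<Union>q) Z"
        unfolding qp_type2_def using Zs True q H(2) False by blast
      then show ?thesis by (auto simp: MQ_circuits_def qp_circuits_def)
    next
      case False2: False
      have "qp_type3 d n Q (\<lambda>q. \<Union>q) Z"
        unfolding qp_type3_def using Zs cZ False2 False by blast
      then show ?thesis by (auto simp: MQ_circuits_def qp_circuits_def)
    qed
  qed
  then show "dependent {1..d} (MQ_circuits d n Q) X"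
    using Xs Z(2) by (auto simp: dependent_def indep_def)
qed

end
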